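(* Let $\Lambda:\mathbb{R}_{\geq1}\to\mathbb{R}_{\geq1}$ be non-decreasing with $\lim_{x\to\infty}\Lambda(x)=\infty$. Then there exists $\varphi\in\Phi$ such that $\mathscr{L}^{s,\Lambda}\subseteq\mathscr{L}_{\varphi}$. Furthermore, there exists $\psi\in\Phi$ such that $\mathscr{L}^{s,\Lambda}\subseteq\mathscr{L}^{ss,\Lambda}\subseteq\mathscr{L}_{\psi}^{\ast}$.
   Context: $\mathscr{L}$ is the set of Liouville numbers (real irrational $\zeta$ such that for every $\eta>0$ there are infinitely many rationals $y/x$, $x\geq1$, with $|\zeta-y/x|\leq x^{-\eta}$). $\Vert\alpha\Vert$ is the distance from $\alpha$ to the nearest integer. $\Phi$ is the set of non-decreasing $\varphi:\mathbb{R}_{\geq 2}\to\mathbb{R}_{\geq 2}$ with $\varphi(x)\to\infty$. For $\varphi\in\Phi$, $\mathscr{L}_{\varphi}$ is the set of $\zeta\in\mathscr{L}$ such that for every positive integer $N$ there is an integer $q$ with $2\leq q\leq\varphi(N)$ and $\Vert q\zeta\Vert\leq q^{-N}$; $\mathscr{L}_{\varphi}^{\ast}$ is the set of $\zeta\in\mathscr{L}$ for which this holds for all $N\geq N_0(\zeta)$. For $\zeta\in\mathscr{L}$ let $s_n/t_n$ ($n\geq0$) be its continued fraction convergents. $\zeta$ is semi-strong if there is a strictly increasing sequence $(v_i)_{i\geq0}$ of non-negative integers such that, defining $\omega(v_i)$ by $|t_{v_i}\zeta-s_{v_i}|=t_{v_i}^{-\omega(v_i)}$, one has $\lim_{i\to\infty}\omega(v_i)=\infty$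 and $\limsup_{i\to\infty}\frac{\log t_{v_{i+1}}}{\log t_{v_i+1}}<\infty$. $\zeta$ is strong if $\lim_{i\to\infty}\omega(i)=\infty$ with $v_i=i$. $\mathscr{L}^{ss,\Lambda}$ (resp. $\mathscr{L}^{s,\Lambda}$) is the set of semi-strong (resp. strong) $\zeta$ for which a sequence $(v_i)$ as in the respective definition can be chosen with $\omega(v_i)\geq\Lambda(i)$ for all $i\geq1$. *)

theory Defs
  imports Complex_Main "HOL-Library.Liminf_Limsup" "HOL-Library.Extended_Real"
begin

definition dist_int :: "real \<Rightarrow> real" where
  "dist_int \<alpha> = min (\<alpha> - of_int \<lfloor>\<alpha>\<rfloor>) (of_int \<lceil>\<alpha>\<rceil> - \<alpha>)"

definition Liouville :: "real set" where
  "Liouville = {\<zeta>. \<zeta> \<notin> \<rat> \<and>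
     (\<forall>\<eta>>0. infinite {r::real. \<exists>x y::int. x \<ge> 1 \<and> r = of_int y / of_int x \<and>
                   \<bar>\<zeta> - r\<bar> \<le> (of_int x) powr (-\<eta>)})}"

definition PhiClass :: "(real \<Rightarrow> real) set" where
  "PhiClass = {\<phi>. (\<forall>x\<ge>2. \<phi> x \<ge> 2) \<and> mono_on {2..} \<phi> \<and> filterlim \<phi> at_top at_top}"

definition L_phi :: "(real \<Rightarrow> real) \<Rightarrow> real set" where
  "L_phi \<phi> = {\<zeta> \<in> Liouville. \<forall>N::nat. N \<ge> 1 \<longrightarrow>
      (\<exists>q::int. 2 \<le> q \<and> real_of_int q \<le> \<phi> (real N) \<and>
                dist_int (of_int q * \<zeta>) \<le> inverse (real_of_int q ^ N))}"

definition L_phi_star :: "(real \<Rightarrow> real) \<Rightarrow> real set" where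
  "L_phi_star \<phi> = {\<zeta> \<in> Liouville. \<exists>N0::nat. \<forall>N::nat. N \<ge> 1 \<and> N \<ge> N0 \<longrightarrow>
      (\<exists>q::int. 2 \<le> q \<and> real_of_int q \<le> \<phi> (real N) \<and>
                dist_int (of_int q * \<zeta>) \<le> inverse (real_of_int q ^ N))}"

text \<open>Continued fraction expansion: complete quotients, partial quotients, convergents \<open>s_n/t_n\<close>.\<close>
fun cf_rem :: "real \<Rightarrow> nat \<Rightarrow> real" where
  "cf_rem \<zeta> 0 = \<zeta>"
| "cf_rem \<zeta> (Suc n) = 1 / (cf_rem \<zeta> n - of_int \<lfloor>cf_rem \<zeta> n\<rfloor>)"

definition cf_a :: "real \<Rightarrow> nat \<Rightarrow> int" where
  "cf_a \<zeta> n = \<lfloor>cf_rem \<zeta> n\<rfloor>"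

fun cf_s :: "real \<Rightarrow> nat \<Rightarrow> int" where
  "cf_s \<zeta> 0 = cf_a \<zeta> 0"
| "cf_s \<zeta> (Suc 0) = cf_a \<zeta> 1 * cf_a \<zeta> 0 + 1"
| "cf_s \<zeta> (Suc (Suc n)) = cf_a \<zeta> (Suc (Suc n)) * cf_s \<zeta> (Suc n) + cf_s \<zeta> n"

fun cf_t :: "real \<Rightarrow> nat \<Rightarrow> int" where
  "cf_t \<zeta> 0 = 1"
| "cf_t \<zeta> (Suc 0) = cf_a \<zeta> 1"
| "cf_t \<zeta> (Suc (Suc n)) = cf_a \<zeta> (Suc (Suc n)) * cf_t \<zeta> (Suc n) + cf_t \<zeta> n"

definition cf_omega :: "real \<Rightarrow> nat \<Rightarrow> real" where
  "cf_omega \<zeta> n = - log (real_of_int (cf_t \<zeta> n))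
                        \<bar>of_int (cf_t \<zeta> n) * \<zeta> - of_int (cf_s \<zeta> n)\<bar>"

definition L_ss :: "(real \<Rightarrow> real) \<Rightarrow> real set" where
  "L_ss \<Lambda> = {\<zeta> \<in> Liouville. \<exists>v::nat \<Rightarrow> nat. strict_mono v \<and>
      filterlim (\<lambda>i. cf_omega \<zeta> (v i)) at_top sequentially \<and>
      limsup (\<lambda>i. ereal (ln (real_of_int (cf_t \<zeta> (v (Suc i))))
                          / ln (real_of_int (cf_t \<zeta> (v i + 1))))) < \<infinity> \<and>
      (\<forall>i\<ge>1. cf_omega \<zeta> (v i) \<ge> \<Lambda> (real i))}"

definition L_s :: "(real \<Rightarrow> real) \<Rightarrow> real set" where
  "L_s \<Lambda> = {\<zeta> \<in> Liouville.
      filterlim (\<lambda>i. cf_omega \<zeta> i) at_top sequentially \<and>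
      (\<forall>i\<ge>1. cf_omega \<zeta> i \<ge> \<Lambda> (real i))}"

end

theory Submission
  imports Defs
begin


definition Sp :: "real \<Rightarrow> nat \<Rightarrow> int" where "Sp z k = (if k = 0 then 1 else cf_s z (k-1))"
definition Tp :: "real \<Rightarrow> nat \<Rightarrow> int" where "Tp z k = (if k = 0 then 0 else cf_t z (k-1))"

lemma s_rec: "cf_s z (Suc k) = cf_a z (Suc k) * cf_s z k + Sp z k"
  by (cases k) (auto simp: Sp_def)
lemma t_rec: "cf_t z (Suc k) = cf_a z (Suc k) * cf_t z k + Tp z k"
  by (cases k) (auto simp: Tp_def)

lemma rem_irrat: "z \<notin> \<rat> \<Longrightarrow> cf_rem z k \<notin> \<rat>"
proof (induction k)
  case 0 then show ?case by simp
next
  case (Suc k)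
  let ?x = "cf_rem z k"
  have "?x - of_int \<lfloor>?x\<rfloor> \<notin> \<rat>"
  proof
    assume "?x - of_int \<lfloor>?x\<rfloor> \<in> \<rat>"
    then have "?x - of_int \<lfloor>?x\<rfloor> + of_int \<lfloor>?x\<rfloor> \<in> \<rat>" by (intro Rats_add) auto
    with Suc show False by simp
  qed
  then have "1 / (?x - of_int \<lfloor>?x\<rfloor>) \<notin> \<rat>"
    by (metis Rats_1 Rats_divide div_by_1 divide_divide_eq_right mult_1)
  then show ?case by simp
qed

lemma frac_pos: "(x::real) \<notin> \<rat> \<Longrightarrow> 0 < x - of_int \<lfloor>x\<rfloor> \<and> x - of_int \<lfloor>x\<rfloor> < 1"
proof -
  assume "x \<notin> \<rat>"
  then have "x \<noteq> of_int \<lfloor>x\<rfloor>" by (metis Rats_of_int)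
  moreover have "of_int \<lfloor>x\<rfloor> \<le> x" "x < of_int \<lfloor>x\<rfloor> + 1" by linarith+
  ultimately show ?thesis by linarith
qed

lemma rem_gt1: "z \<notin> \<rat> \<Longrightarrow> cf_rem z (Suc k) > 1"
proof -
  assume z: "z \<notin> \<rat>"
  from frac_pos[OF rem_irrat[OF z, of k]] show ?thesis
    by (simp add: less_divide_eq)
qed

lemma a_ge1: "z \<notin> \<rat> \<Longrightarrow> cf_a z (Suc k) \<ge> 1"
  using rem_gt1[of z k] unfolding cf_a_def by linarith

lemma t_pos: "z \<notin> \<rat> \<Longrightarrow> cf_t z k \<ge> 1 \<and> 0 \<le> Tp z k \<and> Tp z k \<le> cf_t z k"
proof (induction k)
  case 0 then show ?case by (simp add: Tp_def)
next
  case (Suc k)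
  have a: "cf_a z (Suc k) \<ge> 1" using a_ge1 Suc by blast
  have "cf_a z (Suc k) * cf_t z k \<ge> cf_t z k" using a Suc by (simp add: mult_le_cancel_right1)
  then have "cf_t z (Suc k) \<ge> cf_t z k" using Suc t_rec[of z k] by linarith
  moreover have "Tp z (Suc k) = cf_t z k" by (simp add: Tp_def)
  ultimately show ?case using Suc by simp
qed

lemma t_mono_step: "z \<notin> \<rat> \<Longrightarrow> cf_t z k \<le> cf_t z (Suc k)"
  using t_pos[of z "Suc k"] by (simp add: Tp_def)

lemma det: "cf_t z k * Sp z k - cf_s z k * Tp z k = (-1) ^ k"
proof (induction k)
  case 0 then show ?case by (simp add: Sp_def Tp_def)
next
  case (Suc k)
  have "cf_t z (Suc k) * Sp z (Suc k) - cf_s z (Suc k) * Tp z (Suc k)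
      = -(cf_t z k * Sp z k - cf_s z k * Tp z k)"
    by (simp add: s_rec t_rec Sp_def Tp_def algebra_simps)
  then show ?case using Suc by simp
qed

lemma key: "z \<notin> \<rat> \<Longrightarrow>
  z * (of_int (cf_t z k) * cf_rem z (Suc k) + of_int (Tp z k))
   = of_int (cf_s z k) * cf_rem z (Suc k) + of_int (Sp z k)"
proof (induction k)
  case 0
  have "z \<noteq> of_int \<lfloor>z\<rfloor>" using 0 by (metis Rats_of_int)
  then have "z - of_int \<lfloor>z\<rfloor> \<noteq> 0" by simp
  then show ?case by (simp add: Tp_def Sp_def cf_a_def field_simps)
next
  case (Suc k)
  define x where "x = cf_rem z (Suc k)"
  define y where "y = cf_rem z (Suc (Suc k))"
  define a where "a = cf_a z (Suc k)"
  have fp: "0 < x - of_int a" using frac_pos[OF rem_irrat[OF Suc.prems, of "Suc k"]]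
    by (simp add: x_def a_def cf_a_def)
  have y: "y = 1 / (x - of_int a)" by (simp add: y_def x_def a_def cf_a_def)
  then have xa: "x = of_int a + 1 / y" using fp by simp
  have ypos: "y > 0" using y fp by simp
  have IH: "z * (of_int (cf_t z k) * x + of_int (Tp z k)) = of_int (cf_s z k) * x + of_int (Sp z k)"
    using Suc by (simp add: x_def)
  have "z * (of_int (cf_t z (Suc k)) * y + of_int (Tp z (Suc k)))
      = y * (z * (of_int (cf_t z k) * x + of_int (Tp z k)))"
    using ypos by (simp add: t_rec Tp_def xa field_simps a_def)
  also have "\<dots> = y * (of_int (cf_s z k) * x + of_int (Sp z k))" by (simp add: IH)
  also have "\<dots> = of_int (cf_s z (Suc k)) * y + of_int (Sp z (Suc k))"
    using ypos by (simp add: s_rec Sp_def xa field_simps a_def)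
  finally show ?case by (simp add: y_def)
qed

lemma approx: assumes z: "z \<notin> \<rat>"
  shows "\<bar>of_int (cf_t z k) * z - of_int (cf_s z k)\<bar> \<le> 1 / of_int (cf_t z (Suc k))"
    and "\<bar>of_int (cf_t z k) * z - of_int (cf_s z k)\<bar> > 0"
proof -
  define x where "x = cf_rem z (Suc k)"
  define D where "D = of_int (cf_t z k) * x + of_int (Tp z k)"
  have tp: "cf_t z k \<ge> 1" "Tp z k \<ge> 0" using t_pos[OF z] by auto
  have x1: "x > 1" using rem_gt1[OF z] x_def by simp
  have ax: "of_int (cf_a z (Suc k)) \<le> x" unfolding x_def cf_a_def by simp
  have "of_int (cf_t z k) * of_int (cf_a z (Suc k)) \<le> of_int (cf_t z k) * x"
    using ax tp by (intro mult_left_mono) auto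
  then have Dge: "of_int (cf_t z (Suc k)) \<le> D" unfolding D_def t_rec by (simp add: algebra_simps)
  have Dpos: "D > 0" unfolding D_def using tp x1
    by (smt (verit) of_int_1_le_iff of_int_nonneg mult_less_cancel_left1)
  have kz: "z * D = of_int (cf_s z k) * x + of_int (Sp z k)" using key[OF z] by (simp add: D_def x_def)
  have "(of_int (cf_t z k) * z - of_int (cf_s z k)) * D
        = of_int (cf_t z k * Sp z k - cf_s z k * Tp z k)"
  proof -
    have "(of_int (cf_t z k) * z - of_int (cf_s z k)) * D = of_int (cf_t z k) * (z * D) - of_int (cf_s z k) * D"
      by (simp add: algebra_simps)
    also have "\<dots> = of_int (cf_t z k) * (of_int (cf_s z k) * x + of_int (Sp z k)) - of_int (cf_s z k) * (of_int (cf_t z k) * x + of_int (Tp z k))"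
      unfolding D_def using kz[unfolded D_def] by (simp only:)
    also have "\<dots> = of_int (cf_t z k * Sp z k - cf_s z k * Tp z k)" by (simp add: algebra_simps)
    finally show ?thesis .
  qed
  also have "\<dots> = (-1) ^ k" by (simp add: det)
  finally have e0: "(of_int (cf_t z k) * z - of_int (cf_s z k)) * D = (-1) ^ k" .
  then have "\<bar>(of_int (cf_t z k) * z - of_int (cf_s z k)) * D\<bar> = 1" by simp
  then have e: "\<bar>of_int (cf_t z k) * z - of_int (cf_s z k)\<bar> * D = 1"
    using Dpos by (simp add: abs_mult)
  then have "\<bar>of_int (cf_t z k) * z - of_int (cf_s z k)\<bar> = 1 / D" using Dpos by (simp add: field_simps)
  also have "\<dots> \<le> 1 / of_int (cf_t z (Suc k))"
    using Dge t_pos[OF z, of "Suc k"] by (intro divide_left_mono) auto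
  finally show "\<bar>of_int (cf_t z k) * z - of_int (cf_s z k)\<bar> \<le> 1 / of_int (cf_t z (Suc k))" .
  from e show "\<bar>of_int (cf_t z k) * z - of_int (cf_s z k)\<bar> > 0" by auto
qed



lemma dist_int_le: "dist_int a \<le> \<bar>a - of_int p\<bar>"
proof -
  have "\<lceil>a\<rceil> \<le> \<lfloor>a\<rfloor> + 1" by (simp add: ceiling_le_iff)
  then have "p \<le> \<lfloor>a\<rfloor> \<or> p \<ge> \<lceil>a\<rceil>" by linarith
  then show ?thesis
  proof
    assume "p \<le> \<lfloor>a\<rfloor>" then have "of_int p \<le> (of_int \<lfloor>a\<rfloor>::real)" by (simp only: of_int_le_iff)
    moreover have "dist_int a \<le> a - of_int \<lfloor>a\<rfloor>" by (simp add: dist_int_def)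
    ultimately show ?thesis by linarith
  next
    assume "p \<ge> \<lceil>a\<rceil>" then have "of_int p \<ge> (of_int \<lceil>a\<rceil>::real)" by (simp only: of_int_le_iff)
    moreover have "dist_int a \<le> of_int \<lceil>a\<rceil> - a" by (simp add: dist_int_def)
    moreover have "a \<le> of_int \<lceil>a\<rceil>" by (rule le_of_int_ceiling)
    ultimately show ?thesis by linarith
  qed
qed

lemma Liouville_irrat: "z \<in> Liouville \<Longrightarrow> z \<notin> \<rat>"
  by (simp add: Liouville_def)

lemma omega_t1: "cf_t z k = 1 \<Longrightarrow> cf_omega z k = 0"
  by (simp add: cf_omega_def log_def)

lemma omega_good:
  assumes z: "z \<notin> \<rat>" and om: "cf_omega z k \<ge> r" and r: "r > 0"
  shows "cf_t z k \<ge> 2" "\<bar>of_int (cf_t z k) * z - of_int (cf_s z k)\<bar> \<le> real_of_int (cf_t z k) powr (-r)"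
proof -
  have t1: "cf_t z k \<ge> 1" using t_pos[OF z] by simp
  have "cf_t z k \<noteq> 1" using omega_t1[of z k] om r by auto
  then show t2: "cf_t z k \<ge> 2" using t1 by simp
  define y where "y = \<bar>of_int (cf_t z k) * z - of_int (cf_s z k)\<bar>"
  have y: "y > 0" using approx(2)[OF z] y_def by simp
  have "real_of_int (cf_t z k) powr (- cf_omega z k) = y"
    unfolding cf_omega_def y_def[symmetric] using t2 y by (simp add: powr_log_cancel)
  moreover have "real_of_int (cf_t z k) powr (- cf_omega z k) \<le> real_of_int (cf_t z k) powr (-r)"
    using om t2 by (intro powr_mono) auto
  ultimately show "\<bar>of_int (cf_t z k) * z - of_int (cf_s z k)\<bar> \<le> real_of_int (cf_t z k) powr (-r)"
    using y_def by simp
qed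

lemma good_q:
  assumes z: "z \<notin> \<rat>" and om: "cf_omega z k \<ge> real N" and N: "N \<ge> 1"
  shows "cf_t z k \<ge> 2" "dist_int (of_int (cf_t z k) * z) \<le> inverse (real_of_int (cf_t z k) ^ N)"
proof -
  show t2: "cf_t z k \<ge> 2" using omega_good(1)[OF z om] N by simp
  have "dist_int (of_int (cf_t z k) * z) \<le> \<bar>of_int (cf_t z k) * z - of_int (cf_s z k)\<bar>"
    by (rule dist_int_le)
  also have "\<dots> \<le> real_of_int (cf_t z k) powr (- real N)" using omega_good(2)[OF z om] N by simp
  also have "\<dots> = inverse (real_of_int (cf_t z k) ^ N)" using t2
    by (simp add: powr_minus powr_realpow)
  finally show "dist_int (of_int (cf_t z k) * z) \<le> inverse (real_of_int (cf_t z k) ^ N)" .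
qed

lemma next_bound:
  assumes z: "z \<notin> \<rat>" and t2: "cf_t z k \<ge> 2"
  shows "ln (real_of_int (cf_t z (Suc k))) \<le> cf_omega z k * ln (real_of_int (cf_t z k))"
proof -
  define y where "y = \<bar>of_int (cf_t z k) * z - of_int (cf_s z k)\<bar>"
  have y: "y > 0" using approx(2)[OF z] y_def by simp
  have tS: "cf_t z (Suc k) \<ge> 1" using t_pos[OF z] by simp
  have "y \<le> 1 / real_of_int (cf_t z (Suc k))" using approx(1)[OF z] y_def by simp
  then have "real_of_int (cf_t z (Suc k)) \<le> 1 / y" using y tS by (simp add: field_simps)
  then have "ln (real_of_int (cf_t z (Suc k))) \<le> ln (1 / y)" using tS y by (subst ln_le_cancel_iff) auto
  also have "\<dots> = - ln y" using y by (simp add: ln_div)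
  also have "\<dots> = cf_omega z k * ln (real_of_int (cf_t z k))"
    unfolding cf_omega_def y_def[symmetric] using t2 by (simp add: log_def)
  finally show ?thesis .
qed

fun Cb :: "nat \<Rightarrow> nat \<Rightarrow> nat" where
  "Cb N 0 = 1"
| "Cb N (Suc k) = 2 ^ (N+1) * (Cb N k) ^ (N+1)"

lemma Cb_pos: "Cb N k \<ge> 1"
  by (induction k) auto

lemma Cb_step: "Cb N k \<le> Cb N (Suc k)"
proof -
  have "Cb N k ^ 1 \<le> Cb N k ^ (N+1)" using Cb_pos[of N k] by (intro power_increasing) auto
  also have "\<dots> \<le> 2 ^ (N+1) * Cb N k ^ (N+1)" by simp
  finally show ?thesis by simp
qed

lemma Cb_mono: "j \<le> k \<Longrightarrow> Cb N j \<le> Cb N k"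
  by (rule lift_Suc_mono_le[of "Cb N"]) (rule Cb_step)

lemma part1_q:
  assumes z: "z \<notin> \<rat>" and om: "cf_omega z i \<ge> real N" and N: "N \<ge> 1"
  shows "\<exists>q::int. 2 \<le> q \<and> real_of_int q \<le> 2 * real (Cb N i) \<and>
            dist_int (of_int q * z) \<le> inverse (real_of_int q ^ N)"
proof (cases "\<forall>k\<le>i. cf_t z k \<le> int (Cb N k)")
  case True
  have a: "cf_t z i \<le> int (Cb N i)" using True by simp
  have "real_of_int (cf_t z i) \<le> 2 * real (Cb N i)"
  proof -
    have "real_of_int (cf_t z i) \<le> real_of_int (int (Cb N i))" using a by (simp only: of_int_le_iff)
    then show ?thesis by simp
  qed
  then show ?thesis
    using good_q[OF z om N] by (intro exI[of _ "cf_t z i"]) simp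
next
  case False
  define P where "P = (\<lambda>k. cf_t z k > int (Cb N k))"
  from False obtain k0 where k0: "k0 \<le> i" "P k0" unfolding P_def by force
  define k where "k = (LEAST k. P k)"
  have Pk: "P k" unfolding k_def using k0(2) by (rule LeastI)
  have ki: "k \<le> i" unfolding k_def using k0 by (meson Least_le order_trans)
  have "k \<noteq> 0" proof assume "k = 0" then show False using Pk by (simp add: P_def) qed
  then obtain j where kj: "k = Suc j" by (cases k) auto
  have nPj: "\<not> P j" unfolding k_def using kj not_less_Least[of j P] k_def by auto
  then have tj: "cf_t z j \<le> int (Cb N j)" by (simp add: P_def)
  have tj1: "cf_t z j \<ge> 1" using t_pos[OF z] by simp
  have tk: "cf_t z (Suc j) > int (Cb N (Suc j))" using Pk kj by (simp add: P_def)
  define q where "q = 2 * cf_t z j"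
  have "(2 * cf_t z j) ^ N * 2 = 2 ^ (N+1) * cf_t z j ^ N" by (simp add: power_mult_distrib)
  also have "\<dots> \<le> 2 ^ (N+1) * int (Cb N j) ^ N"
    using tj tj1 by (intro mult_left_mono power_mono) auto
  also have "\<dots> \<le> 2 ^ (N+1) * int (Cb N j) ^ (N+1)"
    using Cb_pos[of N j] by (intro mult_left_mono power_increasing) auto
  also have "\<dots> = int (Cb N (Suc j))" by simp
  also have "\<dots> < cf_t z (Suc j)" by (rule tk)
  finally have ineq: "q ^ N * 2 \<le> cf_t z (Suc j)" unfolding q_def by simp
  have qpos: "real_of_int q > 0" using tj1 q_def by simp
  have "dist_int (of_int q * z) \<le> \<bar>of_int q * z - of_int (2 * cf_s z j)\<bar>" by (rule dist_int_le)
  also have "\<dots> = 2 * \<bar>of_int (cf_t z j) * z - of_int (cf_s z j)\<bar>"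
  proof -
    have "of_int q * z - of_int (2 * cf_s z j) = 2 * (of_int (cf_t z j) * z - of_int (cf_s z j))"
      by (simp add: q_def algebra_simps)
    then show ?thesis by (simp only:) (simp only: abs_mult abs_numeral)
  qed
  also have "\<dots> \<le> 2 * (1 / of_int (cf_t z (Suc j)))" using approx(1)[OF z, of j] by simp
  also have "\<dots> \<le> inverse (real_of_int q ^ N)"
  proof -
    have "real_of_int (q ^ N * 2) \<le> real_of_int (cf_t z (Suc j))" using ineq by linarith
    then have "real_of_int q ^ N * 2 \<le> real_of_int (cf_t z (Suc j))" by simp
    moreover have "real_of_int (cf_t z (Suc j)) > 0" using t_pos[OF z, of "Suc j"] by simp
    ultimately show ?thesis using qpos by (simp add: field_simps)
  qed
  finally have d: "dist_int (of_int q * z) \<le> inverse (real_of_int q ^ N)" .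
  have "real_of_int q \<le> 2 * real (Cb N j)" using tj q_def by simp
  also have "\<dots> \<le> 2 * real (Cb N i)" using Cb_mono[of j i N] ki kj by simp
  finally show ?thesis using d tj1 q_def by (intro exI[of _ q]) auto
qed



definition mkphi :: "(nat \<Rightarrow> real) \<Rightarrow> real \<Rightarrow> real" where
  "mkphi g x = real (nat \<lceil>x\<rceil>) + 2 + (\<Sum>m\<le>nat \<lceil>x\<rceil>. g m)"

lemma mkphi_mono_nat: "(\<forall>m. g m \<ge> 0) \<Longrightarrow> a \<le> b \<Longrightarrow>
   real a + 2 + (\<Sum>m\<le>a. g m) \<le> real b + 2 + (\<Sum>m\<le>b. g m)"
proof -
  assume g: "\<forall>m. g m \<ge> 0" and ab: "a \<le> b"
  have "(\<Sum>m\<le>a. g m) \<le> (\<Sum>m\<le>b. g m)" using g ab by (intro sum_mono2) auto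
  then show ?thesis using ab by simp
qed

lemma mkphi_Phi: assumes g: "\<forall>m. g m \<ge> 0" shows "mkphi g \<in> PhiClass"
proof -
  have ge: "x \<le> mkphi g x" for x
  proof -
    have "x \<le> real (nat \<lceil>x\<rceil>)" by linarith
    moreover have "(\<Sum>m\<le>nat \<lceil>x\<rceil>. g m) \<ge> 0" using g by (intro sum_nonneg) auto
    ultimately show ?thesis unfolding mkphi_def by linarith
  qed
  have two: "mkphi g x \<ge> 2" for x
  proof -
    have "(\<Sum>m\<le>nat \<lceil>x\<rceil>. g m) \<ge> 0" using g by (intro sum_nonneg) auto
    then show ?thesis unfolding mkphi_def by simp
  qed
  have mono: "mono_on {2..} (mkphi g)"
  proof (rule mono_onI)
    fix x y :: real assume "x \<le> y"
    then have "\<lceil>x\<rceil> \<le> \<lceil>y\<rceil>" by (rule ceiling_mono)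
    then have "nat \<lceil>x\<rceil> \<le> nat \<lceil>y\<rceil>" by (rule nat_mono)
    then show "mkphi g x \<le> mkphi g y" unfolding mkphi_def using mkphi_mono_nat[OF g] by blast
  qed
  have lim: "filterlim (mkphi g) at_top at_top"
    by (rule filterlim_at_top_mono[OF filterlim_ident], rule always_eventually, rule allI, rule ge)
  show ?thesis unfolding PhiClass_def using two mono lim by blast
qed

lemma mkphi_ge: assumes g: "\<forall>m. g m \<ge> 0" shows "g N \<le> mkphi g (real N)"
proof -
  have "g N \<le> (\<Sum>m\<le>N. g m)" using g by (intro member_le_sum) auto
  then show ?thesis unfolding mkphi_def by simp
qed

lemma lam_idx:
  fixes \<Lambda> :: "real \<Rightarrow> real"
  assumes "filterlim \<Lambda> at_top at_top"
  shows "\<exists>i\<ge>1. \<forall>j\<ge>i. \<Lambda> (real j) \<ge> r"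
proof -
  have "eventually (\<lambda>x. (\<lambda>y. r \<le> y) (\<Lambda> x)) at_top"
    using assms[unfolded filterlim_iff] eventually_ge_at_top[of r] by blast
  then have "eventually (\<lambda>x. \<Lambda> x \<ge> r) at_top" by simp
  then obtain x0 where x0: "\<And>x. x \<ge> x0 \<Longrightarrow> \<Lambda> x \<ge> r" by (auto simp: eventually_at_top_linorder)
  show ?thesis
  proof (intro exI[of _ "max 1 (nat \<lceil>x0\<rceil>)"] conjI allI impI)
    fix j assume "max 1 (nat \<lceil>x0\<rceil>) \<le> j"
    then have "real j \<ge> x0" by linarith
    then show "\<Lambda> (real j) \<ge> r" by (rule x0)
  qed simp
qed

definition idx :: "(real \<Rightarrow> real) \<Rightarrow> nat \<Rightarrow> nat" where
  "idx \<Lambda> N = (LEAST i. i \<ge> 1 \<and> (\<forall>j\<ge>i. \<Lambda> (real j) \<ge> real N))"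

lemma idx_prop:
  fixes \<Lambda> :: "real \<Rightarrow> real"
  assumes "filterlim \<Lambda> at_top at_top"
  shows "idx \<Lambda> N \<ge> 1" "\<And>j. j \<ge> idx \<Lambda> N \<Longrightarrow> \<Lambda> (real j) \<ge> real N"
proof -
  obtain i where "i \<ge> 1 \<and> (\<forall>j\<ge>i. \<Lambda> (real j) \<ge> real N)" using lam_idx[OF assms] by blast
  then have "idx \<Lambda> N \<ge> 1 \<and> (\<forall>j\<ge>idx \<Lambda> N. \<Lambda> (real j) \<ge> real N)"
    unfolding idx_def by (rule LeastI)
  then show "idx \<Lambda> N \<ge> 1" "\<And>j. j \<ge> idx \<Lambda> N \<Longrightarrow> \<Lambda> (real j) \<ge> real N" by auto
qed

lemma partA:
  fixes \<Lambda> :: "real \<Rightarrow> real"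
  assumes lim: "filterlim \<Lambda> at_top at_top"
  shows "\<exists>\<phi>\<in>PhiClass. L_s \<Lambda> \<subseteq> L_phi \<phi>"
proof -
  define g where "g m = 2 * real (Cb m (idx \<Lambda> m))" for m
  have g0: "\<forall>m. g m \<ge> 0" by (simp add: g_def)
  have "L_s \<Lambda> \<subseteq> L_phi (mkphi g)"
  proof
    fix z assume zs: "z \<in> L_s \<Lambda>"
    then have zL: "z \<in> Liouville" and om: "\<forall>i\<ge>1. cf_omega z i \<ge> \<Lambda> (real i)"
      by (auto simp: L_s_def)
    have z: "z \<notin> \<rat>" using zL by (rule Liouville_irrat)
    have "\<exists>q::int. 2 \<le> q \<and> real_of_int q \<le> mkphi g (real N) \<and>
                dist_int (of_int q * z) \<le> inverse (real_of_int q ^ N)" if N: "N \<ge> 1" for N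
    proof -
      let ?i = "idx \<Lambda> N"
      have l1: "\<Lambda> (real ?i) \<ge> real N" by (rule idx_prop(2)[OF lim]) simp
      have l2: "cf_omega z ?i \<ge> \<Lambda> (real ?i)" using om idx_prop(1)[OF lim, of N] by blast
      have "cf_omega z ?i \<ge> real N" using l1 l2 by linarith
      then obtain q where q: "2 \<le> q" "real_of_int q \<le> 2 * real (Cb N ?i)"
          "dist_int (of_int q * z) \<le> inverse (real_of_int q ^ N)"
        using part1_q[OF z _ N] by blast
      have gN: "g N = 2 * real (Cb N ?i)" by (simp add: g_def)
      have "g N \<le> mkphi g (real N)" by (rule mkphi_ge[OF g0])
      then have "real_of_int q \<le> mkphi g (real N)" using q(2) gN by linarith
      then show ?thesis using q by blast
    qed
    then show "z \<in> L_phi (mkphi g)" unfolding L_phi_def using zL by blast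
  qed
  then show ?thesis using mkphi_Phi[OF g0] by blast
qed

lemma partB: fixes \<Lambda> :: "real \<Rightarrow> real" shows "L_s \<Lambda> \<subseteq> L_ss \<Lambda>"
proof
  fix z assume "z \<in> L_s \<Lambda>"
  then have zL: "z \<in> Liouville" and lim: "filterlim (\<lambda>i. cf_omega z i) at_top sequentially"
    and om: "\<forall>i\<ge>1. cf_omega z i \<ge> \<Lambda> (real i)" by (auto simp: L_s_def)
  have "limsup (\<lambda>i. ereal (ln (real_of_int (cf_t z (Suc i))) / ln (real_of_int (cf_t z (i + 1))))) \<le> 1"
  proof (rule Limsup_bounded, rule always_eventually, rule allI)
    fix i
    have "ln (real_of_int (cf_t z (Suc i))) / ln (real_of_int (cf_t z (i + 1))) \<le> 1"
      by (cases "ln (real_of_int (cf_t z (Suc i))) = 0") auto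
    then show "ereal (ln (real_of_int (cf_t z (Suc i))) / ln (real_of_int (cf_t z (i + 1)))) \<le> 1"
      by simp
  qed
  then have "limsup (\<lambda>i. ereal (ln (real_of_int (cf_t z (Suc i))) / ln (real_of_int (cf_t z (i + 1))))) < \<infinity>"
    by (rule le_less_trans) simp
  moreover have "strict_mono (\<lambda>i::nat. i)" by (simp add: strict_mono_def)
  ultimately have "\<exists>v::nat \<Rightarrow> nat. strict_mono v \<and>
      filterlim (\<lambda>i. cf_omega z (v i)) at_top sequentially \<and>
      limsup (\<lambda>i. ereal (ln (real_of_int (cf_t z (v (Suc i))))
                          / ln (real_of_int (cf_t z (v i + 1))))) < \<infinity> \<and>
      (\<forall>i\<ge>1. cf_omega z (v i) \<ge> \<Lambda> (real i))"
    using lim om by (intro exI[of _ "\<lambda>i. i"] conjI) simp_all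
  then show "z \<in> L_ss \<Lambda>" unfolding L_ss_def using zL by blast
qed



lemma limsup_fin_bound:
  assumes "limsup f < (\<infinity>::ereal)"
  shows "\<exists>c::real. \<exists>i1. \<forall>i\<ge>i1. f i < ereal c"
proof -
  obtain w where w: "limsup f < w" "w < \<infinity>" using dense[OF assms] by blast
  have "w \<noteq> -\<infinity>" using w(1) by auto
  then obtain c where c: "w = ereal c" using w(2) by (cases w) auto
  have "eventually (\<lambda>i. f i < w) sequentially" using Limsup_lessD[OF w(1)] .
  then have "eventually (\<lambda>i. f i < ereal c) sequentially" using c by simp
  then obtain i1 where "\<forall>i\<ge>i1. f i < ereal c" unfolding eventually_sequentially by blast
  then show ?thesis by blast
qed

lemma partC:
  fixes \<Lambda> :: "real \<Rightarrow> real"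
  assumes L1: "\<forall>x\<ge>1. \<Lambda> x \<ge> 1" and lim: "filterlim \<Lambda> at_top at_top"
  shows "\<exists>\<psi>\<in>PhiClass. L_ss \<Lambda> \<subseteq> L_phi_star \<psi>"
proof -
  define g where "g m = exp ((real m * real m) ^ idx \<Lambda> m * real m)" for m
  have g0: "\<forall>m. g m \<ge> 0" by (simp add: g_def)
  have "L_ss \<Lambda> \<subseteq> L_phi_star (mkphi g)"
  proof
    fix z assume "z \<in> L_ss \<Lambda>"
    then have zL: "z \<in> Liouville" and "\<exists>v::nat \<Rightarrow> nat. strict_mono v \<and>
      filterlim (\<lambda>i. cf_omega z (v i)) at_top sequentially \<and>
      limsup (\<lambda>i. ereal (ln (real_of_int (cf_t z (v (Suc i))))
                          / ln (real_of_int (cf_t z (v i + 1))))) < \<infinity> \<and>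
      (\<forall>i\<ge>1. cf_omega z (v i) \<ge> \<Lambda> (real i))" unfolding L_ss_def by (auto dest: CollectD)
    then obtain v :: "nat \<Rightarrow> nat" where
      ls: "limsup (\<lambda>i. ereal (ln (real_of_int (cf_t z (v (Suc i))))
                          / ln (real_of_int (cf_t z (v i + 1))))) < \<infinity>"
      and om: "\<forall>i\<ge>1. cf_omega z (v i) \<ge> \<Lambda> (real i)" by blast
    have z: "z \<notin> \<rat>" using zL by (rule Liouville_irrat)
    obtain c i1 where ci: "\<And>i. i \<ge> i1 \<Longrightarrow> ereal (ln (real_of_int (cf_t z (v (Suc i))))
                          / ln (real_of_int (cf_t z (v i + 1)))) < ereal c"
      using limsup_fin_bound[OF ls] by blast
    define C where "C = real (nat \<lceil>c\<rceil>) + 1"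
    have Cc: "c \<le> C" "C \<ge> 1" unfolding C_def by linarith+
    define m0 where "m0 = max i1 1"
    define T where "T i = real_of_int (cf_t z (v i))" for i
    have omi: "cf_omega z (v i) \<ge> 1" if "i \<ge> 1" for i
    proof -
      have "real i \<ge> 1" using that by simp
      then have "\<Lambda> (real i) \<ge> 1" using L1 by blast
      moreover have "cf_omega z (v i) \<ge> \<Lambda> (real i)" using om that by blast
      ultimately show ?thesis by linarith
    qed
    have t2: "cf_t z (v i) \<ge> 2" if "i \<ge> 1" for i
      using omega_good(1)[OF z omi[OF that]] by simp
    have Tpos: "ln (T i) > 0" if "i \<ge> 1" for i
      using t2[OF that] unfolding T_def by simp
    have step: "ln (T (Suc i)) \<le> C * cf_omega z (v i) * ln (T i)" if "i \<ge> m0" for i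
    proof -
      have i1: "i \<ge> 1" "i \<ge> i1" using that m0_def by auto
      have tt: "cf_t z (v i + 1) \<ge> 2" using t2[OF i1(1)] t_mono_step[OF z, of "v i"] by simp
      define b where "b = ln (real_of_int (cf_t z (v i + 1)))"
      have b: "b > 0" unfolding b_def using tt by simp
      have "ln (T (Suc i)) / b < c" using ci[OF i1(2)] unfolding b_def T_def by simp
      then have "ln (T (Suc i)) < c * b" using b by (simp add: divide_less_eq)
      also have "\<dots> \<le> C * b" using Cc b by (intro mult_right_mono) auto
      also have "b \<le> cf_omega z (v i) * ln (T i)"
        unfolding b_def T_def using next_bound[OF z t2[OF i1(1)]] by simp
      then have "C * b \<le> C * (cf_omega z (v i) * ln (T i))" using Cc by (intro mult_left_mono) auto
      finally show ?thesis by (simp add: mult.assoc)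
    qed
    define K where "K = ln (T m0)"
    have Kpos: "K > 0" unfolding K_def using Tpos m0_def by simp
    define N0 where "N0 = max (nat \<lceil>C\<rceil>) (nat \<lceil>K\<rceil>)"
    have "\<exists>q::int. 2 \<le> q \<and> real_of_int q \<le> mkphi g (real N) \<and>
                dist_int (of_int q * z) \<le> inverse (real_of_int q ^ N)"
      if N: "N \<ge> 1" "N \<ge> N0" for N
    proof -
      have CN: "C \<le> real N" "K \<le> real N" using N unfolding N0_def by linarith+
      define P where "P i = (i \<ge> m0 \<and> cf_omega z (v i) \<ge> real N)" for i
      define j where "j = max m0 (idx \<Lambda> N)"
      have Pj: "P j"
      proof -
        have "\<Lambda> (real j) \<ge> real N" by (rule idx_prop(2)[OF lim]) (simp add: j_def)
        moreover have "cf_omega z (v j) \<ge> \<Lambda> (real j)" using om m0_def j_def by simp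
        ultimately show ?thesis unfolding P_def j_def by simp
      qed
      define s where "s = (LEAST i. P i)"
      have Ps: "P s" unfolding s_def using Pj by (rule LeastI)
      have sj: "s \<le> j" unfolding s_def using Pj by (rule Least_le)
      have bound: "m0 + d \<le> s \<longrightarrow> ln (T (m0 + d)) \<le> (C * real N) ^ d * K" for d
      proof (induction d)
        case 0 then show ?case by (simp add: K_def)
      next
        case (Suc d)
        show ?case
        proof
          assume a: "m0 + Suc d \<le> s"
          then have "m0 + d < s" by simp
          then have "\<not> P (m0 + d)" unfolding s_def by (rule not_less_Least)
          then have lt: "cf_omega z (v (m0 + d)) < real N" unfolding P_def by simp
          have Lp: "ln (T (m0 + d)) > 0" using Tpos m0_def by simp
          have IH: "ln (T (m0 + d)) \<le> (C * real N) ^ d * K" using Suc a by simp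
          have "ln (T (m0 + Suc d)) \<le> C * cf_omega z (v (m0 + d)) * ln (T (m0 + d))"
            using step[of "m0 + d"] by simp
          also have "\<dots> \<le> C * real N * ln (T (m0 + d))"
            using lt Lp Cc by (intro mult_right_mono mult_left_mono) auto
          also have "\<dots> \<le> C * real N * ((C * real N) ^ d * K)"
            using IH Cc by (intro mult_left_mono) auto
          finally show "ln (T (m0 + Suc d)) \<le> (C * real N) ^ Suc d * K" by (simp add: mult.assoc)
        qed
      qed
      have ms: "m0 \<le> s" using Ps P_def by simp
      have lnq: "ln (T s) \<le> (C * real N) ^ (s - m0) * K" using bound[of "s - m0"] ms by simp
      have "1 * 1 \<le> C * real N" using Cc N by (intro mult_mono) auto
      then have CN1: "C * real N \<ge> 1" by simp
      have "s - m0 \<le> idx \<Lambda> N" using sj unfolding j_def by simp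
      then have "(C * real N) ^ (s - m0) \<le> (C * real N) ^ idx \<Lambda> N"
        using CN1 by (intro power_increasing) auto
      also have "\<dots> \<le> (real N * real N) ^ idx \<Lambda> N"
        using CN1 CN Cc by (intro power_mono mult_right_mono) auto
      finally have "(C * real N) ^ (s - m0) * K \<le> (real N * real N) ^ idx \<Lambda> N * real N"
        using Kpos CN by (intro mult_mono) auto
      with lnq have lnq2: "ln (T s) \<le> (real N * real N) ^ idx \<Lambda> N * real N" by linarith
      have s1: "s \<ge> 1" using ms m0_def by simp
      have "T s = exp (ln (T s))" using t2[OF s1] unfolding T_def by simp
      also have "\<dots> \<le> g N" unfolding g_def using lnq2 by simp
      also have "\<dots> \<le> mkphi g (real N)" by (rule mkphi_ge[OF g0])
      finally have qb: "real_of_int (cf_t z (v s)) \<le> mkphi g (real N)" unfolding T_def .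
      have oms: "cf_omega z (v s) \<ge> real N" using Ps P_def by simp
      show ?thesis using good_q[OF z oms N(1)] qb by blast
    qed
    then show "z \<in> L_phi_star (mkphi g)" unfolding L_phi_star_def using zL by blast
  qed
  then show ?thesis using mkphi_Phi[OF g0] by blast
qed


theorem proposition3p8:
  fixes \<Lambda> :: "real \<Rightarrow> real"
  assumes "\<forall>x\<ge>1. \<Lambda> x \<ge> 1"
    and "mono_on {1..} \<Lambda>"
    and "filterlim \<Lambda> at_top at_top"
  shows "(\<exists>\<phi>\<in>PhiClass. L_s \<Lambda> \<subseteq> L_phi \<phi>) \<and>
         (\<exists>\<psi>\<in>PhiClass. L_s \<Lambda> \<subseteq> L_ss \<Lambda> \<and> L_ss \<Lambda> \<subseteq> L_phi_star \<psi>)"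
  using partA[OF assms(3)] partB[of \<Lambda>] partC[OF assms(1) assms(3)] by blast

end
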